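(* Let $\alpha\in(0,1)$ and let $G_\alpha$ be the two-player zero-sum game in which the $x$-player (maximizer) and the $y$-player (minimizer) choose $x\in[0,1-\alpha]$ and $y\in[0,1-\alpha]$ respectively (mixed strategies being probability distributions on $[0,1-\alpha]$), with payoff $g(x,y)=(1-x)-(1-y)\mathbf{1}_{y\ge x}$. Let $v$ denote its value. (i) If $\alpha\ge\frac1e$, then $v=-\alpha\ln\alpha$; an optimal strategy of the $x$-player is the distribution on $[0,1-\alpha]$ with an atom of weight $\alpha$ at $x=0$ and density $f_X(x)=\frac{\alpha}{(1-x)^2}$ on $[0,1-\alpha]$; and an optimal strategy of the $y$-player is the distribution with an atom of weight $1+\ln\alpha$ at $y=1-\alpha$ and density $f_Y(y)=\frac{1}{1-y}$ on $[0,1-\alpha]$. (ii) If $\alpha<\frac1e$, then $v=\frac1e$; an optimal strategy of the $x$-player is the distribution with an atom of weight $\frac1e$ at $x=0$ and density $f_X(x)=\frac{1}{e(1-x)^2}$ on $[0,1-\frac1e]$; and an optimal strategy of the $y$-player is the distribution with density $f_Y(y)=\frac{1}{1-y}$ on $[0,1-\frac1e]$. *)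

theory Defs
  imports "HOL-Probability.Probability"
begin

definition payoff :: "real \<Rightarrow> real \<Rightarrow> real" where
  "payoff x y = (1 - x) - (if y \<ge> x then 1 - y else 0)"

definition strategies :: "real \<Rightarrow> real measure set" where
  "strategies \<alpha> = {M. sets M = sets borel \<and> prob_space M \<and> emeasure M {0..1-\<alpha>} = 1}"

definition exp_payoff :: "real measure \<Rightarrow> real measure \<Rightarrow> real" where
  "exp_payoff P Q = (\<integral>x. (\<integral>y. payoff x y \<partial>Q) \<partial>P)"

definition lower_value :: "real \<Rightarrow> real" where
  "lower_value \<alpha> = (SUP P\<in>strategies \<alpha>. INF Q\<in>strategies \<alpha>. exp_payoff P Q)"

definition upper_value :: "real \<Rightarrow> real" where
  "upper_value \<alpha> = (INF Q\<in>strategies \<alpha>. SUP P\<in>strategies \<alpha>. exp_payoff P Q)"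

definition is_value :: "real \<Rightarrow> real \<Rightarrow> bool" where
  "is_value \<alpha> v \<longleftrightarrow> lower_value \<alpha> = v \<and> upper_value \<alpha> = v"

definition optimal_x :: "real \<Rightarrow> real \<Rightarrow> real measure \<Rightarrow> bool" where
  "optimal_x \<alpha> v P \<longleftrightarrow> P \<in> strategies \<alpha> \<and> (\<forall>Q\<in>strategies \<alpha>. exp_payoff P Q \<ge> v)"

definition optimal_y :: "real \<Rightarrow> real \<Rightarrow> real measure \<Rightarrow> bool" where
  "optimal_y \<alpha> v Q \<longleftrightarrow> Q \<in> strategies \<alpha> \<and> (\<forall>P\<in>strategies \<alpha>. exp_payoff P Q \<le> v)"

definition atom_plus_density :: "real \<Rightarrow> real \<Rightarrow> (real \<Rightarrow> real) \<Rightarrow> real \<Rightarrow> real measure" where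
  "atom_plus_density a c f L = measure_of UNIV (sets borel)
     (\<lambda>A. ennreal a * indicator A c + (\<integral>\<^sup>+ x\<in>A \<inter> {0..L}. ennreal (f x) \<partial>lborel))"

end

theory Submission
  imports Defs
begin

lemma apd_basic:
  fixes f :: "real \<Rightarrow> real" and L :: real
  assumes a: "0 \<le> a" and fm[measurable]: "f \<in> borel_measurable borel"
  defines "D \<equiv> density lborel (\<lambda>x. ennreal (f x) * indicator {0..L} x)"
  shows "sets (atom_plus_density a c f L) = sets borel"
    and "space (atom_plus_density a c f L) = UNIV"
    and "\<And>A. A \<in> sets borel \<Longrightarrow> emeasure (atom_plus_density a c f L) A
            = ennreal a * emeasure (return borel c) A + emeasure D A"
proof -
  define \<mu> where "\<mu> = (\<lambda>A. ennreal a * indicator A c + (\<integral>\<^sup>+ x\<in>A \<inter> {0..L}. ennreal (f x) \<partial>lborel))"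
  have apd: "atom_plus_density a c f L = measure_of UNIV (sets borel) \<mu>"
    unfolding atom_plus_density_def \<mu>_def by simp
  have sa: "sigma_algebra UNIV (sets borel)"
    by (metis sets.sigma_algebra_axioms space_borel)
  have mu: "\<mu> A = ennreal a * emeasure (return borel c) A + emeasure D A" if "A \<in> sets borel" for A
    unfolding \<mu>_def D_def using that
    by (simp add: emeasure_density indicator_inter_arith ac_simps)
  show ss: "sets (atom_plus_density a c f L) = sets borel"
    unfolding apd by (simp add: sets_measure_of_conv sigma_algebra.sigma_sets_eq[OF sa])
  show "space (atom_plus_density a c f L) = UNIV"
    unfolding apd by (simp add: space_measure_of_conv)
  have pos: "positive (sets borel) \<mu>"
    unfolding positive_def \<mu>_def by simp
  have ca: "countably_additive (sets borel) \<mu>"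
    unfolding countably_additive_def
  proof (intro allI impI)
    fix A :: "nat \<Rightarrow> real set"
    assume A: "range A \<subseteq> sets borel" "disjoint_family A" "\<Union> (range A) \<in> sets borel"
    have "(\<Sum>i. \<mu> (A i)) = (\<Sum>i. ennreal a * emeasure (return borel c) (A i) + emeasure D (A i))"
      using A by (intro suminf_cong mu) auto
    also have "\<dots> = (\<Sum>i. ennreal a * emeasure (return borel c) (A i)) + (\<Sum>i. emeasure D (A i))"
      by (rule suminf_add[symmetric]) (auto intro: summableI)
    also have "\<dots> = ennreal a * emeasure (return borel c) (\<Union> (range A)) + emeasure D (\<Union> (range A))"
    proof -
      have r: "(\<Sum>i. emeasure (return borel c) (A i)) = emeasure (return borel c) (\<Union> (range A))"
        by (rule suminf_emeasure) (use A in auto)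
      have d: "(\<Sum>i. emeasure D (A i)) = emeasure D (\<Union> (range A))"
        by (rule suminf_emeasure) (use A in \<open>auto simp: D_def\<close>)
      show ?thesis using r d by (simp del: emeasure_return)
    qed
    also have "\<dots> = \<mu> (\<Union> (range A))" using A by (simp add: mu)
    finally show "(\<Sum>i. \<mu> (A i)) = \<mu> (\<Union> (range A))" .
  qed
  fix A :: "real set" assume "A \<in> sets borel"
  then show "emeasure (atom_plus_density a c f L) A = ennreal a * emeasure (return borel c) A + emeasure D A"
    unfolding apd using emeasure_measure_of_sigma[OF sa pos ca] mu by simp
qed


lemma apd_nn_integral:
  fixes f :: "real \<Rightarrow> real" and L :: real and g :: "real \<Rightarrow> ennreal"
  assumes a: "0 \<le> a" and fm[measurable]: "f \<in> borel_measurable borel"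
    and gm: "g \<in> borel_measurable borel"
  shows "(\<integral>\<^sup>+x. g x \<partial>atom_plus_density a c f L)
     = ennreal a * g c + (\<integral>\<^sup>+x. ennreal (f x) * indicator {0..L} x * g x \<partial>lborel)"
proof -
  define N where "N = atom_plus_density a c f L"
  define D where "D = density lborel (\<lambda>x. ennreal (f x) * indicator {0..L} x)"
  note b = apd_basic[OF a fm, where c=c and L=L, folded N_def D_def]
  have mN: "h \<in> borel_measurable N" if "h \<in> borel_measurable borel" for h :: "real \<Rightarrow> ennreal"
    by (subst measurable_cong_sets[OF b(1) refl]) (rule that)
  have mD: "h \<in> borel_measurable D" if "h \<in> borel_measurable borel" for h :: "real \<Rightarrow> ennreal"
    unfolding D_def by (subst measurable_cong_sets[OF sets_density refl]) (simp add: that)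
  have mR: "h \<in> borel_measurable (return borel c)" if "h \<in> borel_measurable borel" for h :: "real \<Rightarrow> ennreal"
    by (subst measurable_cong_sets[OF sets_return refl]) (rule that)
  have "(\<integral>\<^sup>+x. g x \<partial>N) = ennreal a * (\<integral>\<^sup>+x. g x \<partial>return borel c) + (\<integral>\<^sup>+x. g x \<partial>D)"
    using gm
  proof (induction rule: borel_measurable_induct)
    case (cong f g)
    then have "f = g" by auto
    then show ?case using cong by simp
  next
    case (set A)
    then show ?case
      using b(1) b(3)[OF set] by (simp add: nn_integral_indicator D_def del: emeasure_return)
  next
    case (mult u c)
    then show ?case
      by (simp add: nn_integral_cmult mN mD mR distrib_left ac_simps del: nn_integral_return)
  next
    case (add u v)
    then show ?case
      by (simp add: nn_integral_add mN mD mR distrib_left ac_simps del: nn_integral_return)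
  next
    case (seq U)
    have Um: "U i \<in> borel_measurable borel" for i using seq by blast
    have inc: "incseq U" using seq by blast
    have IH: "(\<integral>\<^sup>+x. U i x \<partial>N) = ennreal a * (\<integral>\<^sup>+x. U i x \<partial>return borel c) + (\<integral>\<^sup>+x. U i x \<partial>D)" for i
      using seq by blast
    have incx: "incseq (\<lambda>i. U i x)" for x using inc by (auto simp: incseq_def le_fun_def)
    have incN: "incseq (\<lambda>i. \<integral>\<^sup>+x. U i x \<partial>M)" for M
      using inc unfolding incseq_def by (auto intro!: nn_integral_mono simp: le_fun_def)
    have "(\<integral>\<^sup>+x. (SUP i. U i) x \<partial>N) = (SUP i. \<integral>\<^sup>+x. U i x \<partial>N)"
      unfolding SUP_apply by (rule nn_integral_monotone_convergence_SUP[OF inc mN[OF Um]])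
    also have "\<dots> = (SUP i. ennreal a * (\<integral>\<^sup>+x. U i x \<partial>return borel c) + (\<integral>\<^sup>+x. U i x \<partial>D))"
      by (simp only: IH)
    also have "\<dots> = ennreal a * (SUP i. (\<integral>\<^sup>+x. U i x \<partial>return borel c)) + (SUP i. \<integral>\<^sup>+x. U i x \<partial>D)"
      apply (subst ennreal_SUP_add)
      subgoal using incN[of "return borel c"] by (auto simp: incseq_def intro: mult_left_mono)
      subgoal by (rule incN)
      subgoal by (simp add: SUP_mult_left_ennreal)
      done
    also have "\<dots> = ennreal a * (\<integral>\<^sup>+x. (SUP i. U i) x \<partial>return borel c) + (\<integral>\<^sup>+x. (SUP i. U i) x \<partial>D)"
      unfolding SUP_apply
      by (simp only: nn_integral_monotone_convergence_SUP[OF inc mR[OF Um]] nn_integral_monotone_convergence_SUP[OF inc mD[OF Um]])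
    finally show ?case .
  qed
  also have "\<dots> = ennreal a * g c + (\<integral>\<^sup>+x. ennreal (f x) * indicator {0..L} x * g x \<partial>lborel)"
    unfolding D_def using gm by (simp add: nn_integral_return nn_integral_density)
  finally show ?thesis unfolding N_def .
qed


lemma meas_cong_borel:
  fixes f :: "real \<Rightarrow> 'b::topological_space"
  assumes "sets M = sets borel" "f \<in> borel_measurable borel"
  shows "f \<in> borel_measurable M"
  by (subst measurable_cong_sets[OF assms(1) refl]) (rule assms(2))

lemma meas_cong_borel2:
  fixes f :: "real \<times> real \<Rightarrow> 'b::topological_space"
  assumes "sets M1 = sets borel" "sets M2 = sets borel" "f \<in> borel_measurable (borel \<Otimes>\<^sub>M borel)"
  shows "f \<in> borel_measurable (M1 \<Otimes>\<^sub>M M2)"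
  by (subst measurable_cong_sets[OF sets_pair_measure_cong[OF assms(1,2)] refl]) (rule assms(3))

lemma strat_facts:
  assumes "M \<in> strategies \<alpha>"
  shows "sets M = sets borel" "prob_space M" "AE x in M. x \<in> {0..1-\<alpha>}" "space M = UNIV"
proof -
  show s: "sets M = sets borel" "prob_space M" using assms by (auto simp: strategies_def)
  then interpret prob_space M by simp
  have "prob {0..1-\<alpha>} = 1" using assms by (simp add: strategies_def measure_def)
  then show "AE x in M. x \<in> {0..1-\<alpha>}" by (rule AE_prob_1)
  show "space M = UNIV" using sets_eq_imp_space_eq[OF s(1)] by simp
qed

lemma payoff_meas: "(\<lambda>(x,y). payoff x y) \<in> borel_measurable (borel \<Otimes>\<^sub>M borel)"
  unfolding payoff_def by measurable

lemma kern_meas: "(\<lambda>(x::real,y::real). ennreal (if x \<le> y then 1 - y else 0)) \<in> borel_measurable (borel \<Otimes>\<^sub>M borel)"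
  by measurable


definition kern :: "real \<Rightarrow> real \<Rightarrow> ennreal" where
  "kern x y = ennreal (if x \<le> y then 1 - y else 0)"

lemma kern_meas': "(\<lambda>(x,y). kern x y) \<in> borel_measurable (borel \<Otimes>\<^sub>M borel)"
  unfolding kern_def by (rule kern_meas)

definition Tk :: "real measure \<Rightarrow> real measure \<Rightarrow> ennreal" where
  "Tk P Q = (\<integral>\<^sup>+x. (\<integral>\<^sup>+y. kern x y \<partial>Q) \<partial>P)"

lemma kern_le1:
  assumes "Q \<in> strategies \<alpha>" "0 < \<alpha>"
  shows "(\<integral>\<^sup>+y. kern x y \<partial>Q) \<le> 1"
proof -
  note q = strat_facts[OF assms(1)]
  interpret prob_space Q by (rule q(2))
  have "(\<integral>\<^sup>+y. kern x y \<partial>Q) \<le> (\<integral>\<^sup>+y. 1 \<partial>Q)"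
    by (rule nn_integral_mono_AE) (use q(3) in \<open>auto simp: kern_def\<close>)
  then show ?thesis by (simp add: emeasure_space_1)
qed

lemma Tk_le1:
  assumes "P \<in> strategies \<alpha>" "Q \<in> strategies \<alpha>" "0 < \<alpha>"
  shows "Tk P Q \<le> 1"
proof -
  interpret prob_space P by (rule strat_facts(2)[OF assms(1)])
  have "Tk P Q \<le> (\<integral>\<^sup>+x. 1 \<partial>P)"
    unfolding Tk_def by (rule nn_integral_mono) (rule kern_le1[OF assms(2,3)])
  then show ?thesis by (simp add: emeasure_space_1)
qed

lemma Tk_swap:
  assumes "P \<in> strategies \<alpha>" "Q \<in> strategies \<alpha>"
  shows "Tk P Q = (\<integral>\<^sup>+y. (\<integral>\<^sup>+x. kern x y \<partial>P) \<partial>Q)"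
proof -
  note p = strat_facts[OF assms(1)] and q = strat_facts[OF assms(2)]
  interpret pair_sigma_finite P Q
    by (simp add: pair_sigma_finite_def prob_space_imp_sigma_finite p(2) q(2))
  have m: "(\<lambda>(x,y). kern x y) \<in> borel_measurable (P \<Otimes>\<^sub>M Q)"
    by (rule meas_cong_borel2[OF p(1) q(1) kern_meas'])
  show ?thesis unfolding Tk_def using Fubini[OF m] by simp
qed

lemma exp_payoff_formula:
  assumes P: "P \<in> strategies \<alpha>" and Q: "Q \<in> strategies \<alpha>" and a: "0 < \<alpha>" "\<alpha> < 1"
  shows "exp_payoff P Q = (\<integral>x. 1 - x \<partial>P) - enn2real (Tk P Q)"
proof -
  note p = strat_facts[OF P] and q = strat_facts[OF Q]
  interpret P: prob_space P by (rule p(2))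
  interpret Q: prob_space Q by (rule q(2))
  interpret PQ: pair_sigma_finite P Q
    by (simp add: pair_sigma_finite_def prob_space_imp_sigma_finite p(2) q(2))
  define k where "k x = (\<integral>\<^sup>+y. kern x y \<partial>Q)" for x
  have k1: "k x \<le> 1" for x unfolding k_def by (rule kern_le1[OF Q a(1)])
  have kfin: "k x < top" for x using k1[of x] by (simp add: order_le_less_trans)
  have hm: "(\<lambda>y. if x \<le> y then 1 - y else 0) \<in> borel_measurable Q" for x :: real
    by (rule meas_cong_borel[OF q(1)]) measurable
  have inner: "(\<integral>y. payoff x y \<partial>Q) = (1 - x) - enn2real (k x)" if "x \<in> {0..1-\<alpha>}" for x
  proof -
    have eq: "payoff x y = (1 - x) - (if x \<le> y then 1 - y else 0)" for y
      unfolding payoff_def by auto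
    have "AE y in Q. norm (if x \<le> y then 1 - y else 0) \<le> (1::real)"
      using q(3) by eventually_elim (use a in auto)
    then have int: "integrable Q (\<lambda>y. if x \<le> y then 1 - y else 0)"
      by (rule Q.integrable_const_bound) (rule hm)
    have "(\<integral>y. payoff x y \<partial>Q) = (1 - x) - (\<integral>y. (if x \<le> y then 1 - y else 0) \<partial>Q)"
      unfolding eq using int by (simp add: Q.prob_space)
    also have "(\<integral>y. (if x \<le> y then 1 - y else 0) \<partial>Q) = enn2real (k x)"
      unfolding k_def kern_def
    proof (rule integral_eq_nn_integral)
      show "AE y in Q. 0 \<le> (if x \<le> y then 1 - y else 0)"
        using q(3) by eventually_elim (use a in auto)
    qed (rule hm)
    finally show ?thesis .
  qed
  have m1: "(\<lambda>x. \<integral>y. payoff x y \<partial>Q) \<in> borel_measurable P"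
    using Q.borel_measurable_lebesgue_integral[of "\<lambda>x y. payoff x y" P]
      meas_cong_borel2[OF p(1) q(1) payoff_meas] by simp
  have km: "k \<in> borel_measurable P"
    unfolding k_def
    using Q.borel_measurable_nn_integral[of "\<lambda>x y. kern x y" P]
      meas_cong_borel2[OF p(1) q(1) kern_meas'] by simp
  have m2: "(\<lambda>x. (1 - x) - enn2real (k x)) \<in> borel_measurable P"
  proof (rule borel_measurable_diff)
    show "(\<lambda>x. 1 - x) \<in> borel_measurable P" by (simp add: meas_cong_borel[OF p(1)])
    show "(\<lambda>x. enn2real (k x)) \<in> borel_measurable P" using km by measurable
  qed
  have "exp_payoff P Q = (\<integral>x. (1 - x) - enn2real (k x) \<partial>P)"
    unfolding exp_payoff_def
    by (rule integral_cong_AE[OF m1 m2]) (use p(3) inner in auto)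
  also have "\<dots> = (\<integral>x. 1 - x \<partial>P) - (\<integral>x. enn2real (k x) \<partial>P)"
  proof (rule Bochner_Integration.integral_diff)
    show "integrable P (\<lambda>x. 1 - x)"
    proof (rule P.integrable_const_bound[where B=1])
      show "AE x in P. norm (1 - x) \<le> (1::real)"
        using p(3) by eventually_elim (use a in auto)
    qed (simp add: meas_cong_borel[OF p(1)])
    show "integrable P (\<lambda>x. enn2real (k x))"
      by (rule P.integrable_const_bound[where B=1]) (use km k1 in \<open>auto intro!: AE_I2 enn2real_leI\<close>)
  qed
  also have "(\<integral>x. enn2real (k x) \<partial>P) = enn2real (\<integral>\<^sup>+x. ennreal (enn2real (k x)) \<partial>P)"
    by (rule integral_eq_nn_integral) (use km in auto)
  also have "(\<integral>\<^sup>+x. ennreal (enn2real (k x)) \<partial>P) = Tk P Q"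
    unfolding Tk_def k_def[symmetric] using kfin by simp
  finally show ?thesis .
qed


lemma int_1mx:
  assumes P: "P \<in> strategies \<alpha>" and a: "0 < \<alpha>" "\<alpha> < 1"
  shows "integrable P (\<lambda>x. 1 - x)" "0 \<le> (\<integral>x. 1 - x \<partial>P)" "(\<integral>x. 1 - x \<partial>P) \<le> 1"
proof -
  note p = strat_facts[OF P]
  interpret P: prob_space P by (rule p(2))
  show i: "integrable P (\<lambda>x. 1 - x)"
  proof (rule P.integrable_const_bound[where B=1])
    show "AE x in P. norm (1 - x) \<le> (1::real)"
      using p(3) by eventually_elim (use a in auto)
  qed (simp add: meas_cong_borel[OF p(1)])
  show "0 \<le> (\<integral>x. 1 - x \<partial>P)"
    by (rule P.integral_ge_const[OF i]) (use p(3) in \<open>eventually_elim, use a in auto\<close>)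
  show "(\<integral>x. 1 - x \<partial>P) \<le> 1"
    by (rule P.integral_le_const[OF i]) (use p(3) in \<open>eventually_elim, use a in auto\<close>)
qed

lemma exp_payoff_bound:
  assumes P: "P \<in> strategies \<alpha>" and Q: "Q \<in> strategies \<alpha>" and a: "0 < \<alpha>" "\<alpha> < 1"
  shows "\<bar>exp_payoff P Q\<bar> \<le> 2"
proof -
  have "enn2real (Tk P Q) \<le> 1" by (rule enn2real_leI) (use Tk_le1[OF P Q a(1)] in auto)
  moreover have "0 \<le> enn2real (Tk P Q)" by simp
  ultimately show ?thesis
    using exp_payoff_formula[OF P Q a] int_1mx[OF P a] by linarith
qed

lemma value_from_optimal:
  assumes ox: "optimal_x \<alpha> v P0" and oy: "optimal_y \<alpha> v Q0"
    and bd: "\<And>P Q. P \<in> strategies \<alpha> \<Longrightarrow> Q \<in> strategies \<alpha> \<Longrightarrow> \<bar>exp_payoff P Q\<bar> \<le> 2"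
  shows "is_value \<alpha> v"
proof -
  define S where "S = strategies \<alpha>"
  have P0: "P0 \<in> S" and Q0: "Q0 \<in> S" using ox oy by (auto simp: optimal_x_def optimal_y_def S_def)
  have hx: "\<And>Q. Q \<in> S \<Longrightarrow> v \<le> exp_payoff P0 Q" using ox by (auto simp: optimal_x_def S_def)
  have hy: "\<And>P. P \<in> S \<Longrightarrow> exp_payoff P Q0 \<le> v" using oy by (auto simp: optimal_y_def S_def)
  have b: "\<And>P Q. P \<in> S \<Longrightarrow> Q \<in> S \<Longrightarrow> -2 \<le> exp_payoff P Q \<and> exp_payoff P Q \<le> 2"
    using bd unfolding S_def by (metis abs_le_iff minus_le_iff)
  have ne: "S \<noteq> {}" using P0 by auto
  have bb: "bdd_below ((\<lambda>Q. exp_payoff P Q) ` S)" if "P \<in> S" for P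
    using b that by (intro bdd_belowI[where m="-2"]) auto
  have ba: "bdd_above ((\<lambda>P. exp_payoff P Q) ` S)" if "Q \<in> S" for Q
    using b that by (intro bdd_aboveI[where M="2"]) auto
  have infle: "(INF Q\<in>S. exp_payoff P Q) \<le> exp_payoff P Q0" if "P \<in> S" for P
    by (rule cINF_lower[OF bb[OF that] Q0])
  have supge: "exp_payoff P0 Q \<le> (SUP P\<in>S. exp_payoff P Q)" if "Q \<in> S" for Q
    by (rule cSUP_upper[OF P0 ba[OF that]])
  have "lower_value \<alpha> = v"
    unfolding lower_value_def S_def[symmetric]
  proof (rule antisym)
    show "(SUP P\<in>S. INF Q\<in>S. exp_payoff P Q) \<le> v"
      using infle hy ne by (intro cSUP_least) (auto intro: order_trans)
    have "v \<le> (INF Q\<in>S. exp_payoff P0 Q)" using hx ne by (intro cINF_greatest) auto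
    also have "\<dots> \<le> (SUP P\<in>S. INF Q\<in>S. exp_payoff P Q)"
    proof (rule cSUP_upper[OF P0])
      show "bdd_above ((\<lambda>P. INF Q\<in>S. exp_payoff P Q) ` S)"
        using infle b Q0 by (intro bdd_aboveI[where M="2"]) (auto intro: order_trans)
    qed
    finally show "v \<le> (SUP P\<in>S. INF Q\<in>S. exp_payoff P Q)" .
  qed
  moreover have "upper_value \<alpha> = v"
    unfolding upper_value_def S_def[symmetric]
  proof (rule antisym)
    show "v \<le> (INF Q\<in>S. SUP P\<in>S. exp_payoff P Q)"
      using supge hx ne by (intro cINF_greatest) (auto intro: order_trans)
    have "(INF Q\<in>S. SUP P\<in>S. exp_payoff P Q) \<le> (SUP P\<in>S. exp_payoff P Q0)"
    proof (rule cINF_lower[OF _ Q0])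
      show "bdd_below ((\<lambda>Q. SUP P\<in>S. exp_payoff P Q) ` S)"
        using supge b P0 by (intro bdd_belowI[where m="-2"]) (auto intro: order_trans)
    qed
    also have "\<dots> \<le> v" using hy ne by (intro cSUP_least) auto
    finally show "(INF Q\<in>S. SUP P\<in>S. exp_payoff P Q) \<le> v" .
  qed
  ultimately show ?thesis unfolding is_value_def by simp
qed


lemma FTC1:
  assumes "0 \<le> \<beta>" "0 \<le> t" "t < 1"
  shows "(\<integral>\<^sup>+x. ennreal (\<beta> / (1 - x)\<^sup>2) * indicator {0..t} x \<partial>lborel) = ennreal (\<beta> / (1 - t) - \<beta>)"
proof -
  have "(\<integral>\<^sup>+x. ennreal (\<beta> / (1 - x)\<^sup>2) * indicator {0..t} x \<partial>lborel) = ennreal ((\<lambda>x. \<beta> / (1 - x)) t - (\<lambda>x. \<beta> / (1 - x)) 0)"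
  proof (rule nn_integral_FTC_Icc)
    show "(\<lambda>x. \<beta> / (1 - x)\<^sup>2) \<in> borel_measurable borel" by measurable
    fix x assume x: "x \<in> {0..t}"
    then have "x < 1" using assms by auto
    then show "DERIV (\<lambda>x. \<beta> / (1 - x)) x :> \<beta> / (1 - x)\<^sup>2"
      by (auto intro!: derivative_eq_intros simp: power2_eq_square field_simps)
    show "0 \<le> \<beta> / (1 - x)\<^sup>2" using assms by simp
  qed (use assms in auto)
  then show ?thesis by simp
qed

lemma FTC2:
  assumes "0 \<le> \<beta>" "0 \<le> t" "t < 1"
  shows "(\<integral>\<^sup>+x. ennreal (\<beta> / (1 - x)) * indicator {0..t} x \<partial>lborel) = ennreal (- \<beta> * ln (1 - t))"
proof -
  have "(\<integral>\<^sup>+x. ennreal (\<beta> / (1 - x)) * indicator {0..t} x \<partial>lborel) = ennreal ((\<lambda>x. - \<beta> * ln (1 - x)) t - (\<lambda>x. - \<beta> * ln (1 - x)) 0)"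
  proof (rule nn_integral_FTC_Icc)
    show "(\<lambda>x. \<beta> / (1 - x)) \<in> borel_measurable borel" by measurable
    fix x assume x: "x \<in> {0..t}"
    then have "x < 1" using assms by auto
    then show "DERIV (\<lambda>x. - \<beta> * ln (1 - x)) x :> \<beta> / (1 - x)"
      by (auto intro!: derivative_eq_intros simp: field_simps)
    show "0 \<le> \<beta> / (1 - x)" using assms \<open>x < 1\<close> by simp
  qed (use assms in auto)
  then show ?thesis by simp
qed


definition PX :: "real \<Rightarrow> real measure" where
  "PX \<beta> = atom_plus_density \<beta> 0 (\<lambda>x. \<beta> / (1 - x)\<^sup>2) (1 - \<beta>)"

lemma PX_nn:
  assumes "0 \<le> \<beta>" "g \<in> borel_measurable borel"
  shows "(\<integral>\<^sup>+x. g x \<partial>PX \<beta>) = ennreal \<beta> * g 0 + (\<integral>\<^sup>+x. ennreal (\<beta> / (1 - x)\<^sup>2) * indicator {0..1-\<beta>} x * g x \<partial>lborel)"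
  unfolding PX_def by (rule apd_nn_integral) (use assms in auto)

lemma PX_sets: "0 \<le> \<beta> \<Longrightarrow> sets (PX \<beta>) = sets borel"
  unfolding PX_def by (rule apd_basic(1)) auto

lemma PX_emeasure:
  assumes b: "0 < \<beta>" "\<beta> < 1" and A: "A \<in> sets borel" "0 \<in> A" "{0..1-\<beta>} \<subseteq> A"
  shows "emeasure (PX \<beta>) A = 1"
proof -
  have "emeasure (PX \<beta>) A = (\<integral>\<^sup>+x. indicator A x \<partial>PX \<beta>)"
    using A PX_sets[of \<beta>] b by (simp add: nn_integral_indicator)
  also have "\<dots> = ennreal \<beta> + (\<integral>\<^sup>+x. ennreal (\<beta> / (1 - x)\<^sup>2) * indicator {0..1-\<beta>} x \<partial>lborel)"
    using A b
    by (subst PX_nn) (auto intro!: nn_integral_cong simp: indicator_def subset_iff)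
  also have "\<dots> = ennreal \<beta> + ennreal (1 - \<beta>)"
    using b by (subst FTC1) auto
  also have "\<dots> = 1" using b by (subst ennreal_plus[symmetric]) auto
  finally show ?thesis .
qed

lemma PX_strat:
  assumes "0 < \<alpha>" "\<alpha> \<le> \<beta>" "\<beta> < 1"
  shows "PX \<beta> \<in> strategies \<alpha>"
proof -
  have s: "sets (PX \<beta>) = sets borel" using assms by (intro PX_sets) auto
  have sp: "space (PX \<beta>) = UNIV" using sets_eq_imp_space_eq[OF s] by simp
  have "prob_space (PX \<beta>)"
    by (rule prob_spaceI) (use assms sp in \<open>auto intro!: PX_emeasure\<close>)
  moreover have "emeasure (PX \<beta>) {0..1-\<alpha>} = 1"
    using assms by (intro PX_emeasure) auto
  ultimately show ?thesis using s by (simp add: strategies_def)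
qed

lemma PX_y:
  assumes b: "0 < \<beta>" "\<beta> < 1" and y: "0 \<le> y" "y < 1"
  shows "(\<integral>\<^sup>+x. kern x y \<partial>PX \<beta>) \<le> ennreal \<beta>"
proof -
  define m where "m = min y (1 - \<beta>)"
  have m: "0 \<le> m" "m < 1" "m \<le> y" using b y by (auto simp: m_def)
  have km: "(\<lambda>x. kern x y) \<in> borel_measurable borel" unfolding kern_def by measurable
  have "(\<integral>\<^sup>+x. kern x y \<partial>PX \<beta>) = ennreal \<beta> * kern 0 y + (\<integral>\<^sup>+x. ennreal (\<beta> / (1 - x)\<^sup>2) * indicator {0..1-\<beta>} x * kern x y \<partial>lborel)"
    using b km by (intro PX_nn) auto
  also have "(\<integral>\<^sup>+x. ennreal (\<beta> / (1 - x)\<^sup>2) * indicator {0..1-\<beta>} x * kern x y \<partial>lborel)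
      = (\<integral>\<^sup>+x. ennreal (1 - y) * (ennreal (\<beta> / (1 - x)\<^sup>2) * indicator {0..m} x) \<partial>lborel)"
    by (intro nn_integral_cong) (auto simp: kern_def indicator_def m_def mult.commute)
  also have "\<dots> = ennreal (1 - y) * ennreal (\<beta> / (1 - m) - \<beta>)"
    using b m by (subst nn_integral_cmult) (auto simp: FTC1)
  also have "kern 0 y = ennreal (1 - y)" using y by (simp add: kern_def)
  finally have eq0: "(\<integral>\<^sup>+x. kern x y \<partial>PX \<beta>) = ennreal \<beta> * ennreal (1 - y) + ennreal (1 - y) * ennreal (\<beta> / (1 - m) - \<beta>)" .
  have nn: "0 \<le> \<beta> / (1 - m) - \<beta>" using b m by (simp add: le_divide_eq)
  have eq: "(\<integral>\<^sup>+x. kern x y \<partial>PX \<beta>) = ennreal (\<beta> * (1 - y) + (1 - y) * (\<beta> / (1 - m) - \<beta>))"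
    unfolding eq0 using b y nn by (subst ennreal_plus) (auto simp: ennreal_mult)
  have "\<beta> * (1 - y) + (1 - y) * (\<beta> / (1 - m) - \<beta>) = \<beta> * ((1 - y) / (1 - m))"
    using m by (simp add: field_simps)
  also have "\<dots> \<le> \<beta>" using b m y by (intro mult_left_le) (auto simp: divide_le_eq)
  finally show ?thesis unfolding eq by (intro ennreal_leI)
qed

lemma PX_mean:
  assumes b: "0 < \<beta>" "\<beta> < 1"
  shows "(\<integral>\<^sup>+x. ennreal (1 - x) \<partial>PX \<beta>) = ennreal (\<beta> - \<beta> * ln \<beta>)"
proof -
  have "(\<integral>\<^sup>+x. ennreal (1 - x) \<partial>PX \<beta>) = ennreal \<beta> * 1 + (\<integral>\<^sup>+x. ennreal (\<beta> / (1 - x)\<^sup>2) * indicator {0..1-\<beta>} x * ennreal (1 - x) \<partial>lborel)"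
    using b by (subst PX_nn) auto
  also have "(\<integral>\<^sup>+x. ennreal (\<beta> / (1 - x)\<^sup>2) * indicator {0..1-\<beta>} x * ennreal (1 - x) \<partial>lborel)
     = (\<integral>\<^sup>+x. ennreal (\<beta> / (1 - x)) * indicator {0..1-\<beta>} x \<partial>lborel)"
  proof (intro nn_integral_cong)
    fix x :: real
    show "ennreal (\<beta> / (1 - x)\<^sup>2) * indicator {0..1-\<beta>} x * ennreal (1 - x) = ennreal (\<beta> / (1 - x)) * indicator {0..1-\<beta>} x"
    proof (cases "x \<in> {0..1-\<beta>}")
      case True
      then have "x < 1" using b by auto
      then have nz: "1 - x \<noteq> 0" by simp
      have "\<beta> / (1 - x)\<^sup>2 * (1 - x) = \<beta> / (1 - x)"
        using nz by (simp add: power2_eq_square)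
      then show ?thesis using True b \<open>x < 1\<close> by (simp add: ennreal_mult''[symmetric])
    qed simp
  qed
  also have "\<dots> = ennreal (- \<beta> * ln (1 - (1 - \<beta>)))" using b by (intro FTC2) auto
  finally have e: "(\<integral>\<^sup>+x. ennreal (1 - x) \<partial>PX \<beta>) = ennreal \<beta> * 1 + ennreal (- \<beta> * ln (1 - (1 - \<beta>)))" .
  have "ln \<beta> \<le> 0" using b by simp
  then have "0 \<le> - \<beta> * ln \<beta>" using b by (simp add: mult_le_0_iff)
  then have "ennreal \<beta> + ennreal (- \<beta> * ln \<beta>) = ennreal (\<beta> + - \<beta> * ln \<beta>)"
    using b by (subst ennreal_plus) auto
  then show ?thesis unfolding e by simp
qed


lemma PX_opt:
  assumes a: "0 < \<alpha>" "\<alpha> < 1" and b: "\<alpha> \<le> \<beta>" "\<beta> < 1" and Q: "Q \<in> strategies \<alpha>"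
  shows "- \<beta> * ln \<beta> \<le> exp_payoff (PX \<beta>) Q"
proof -
  have P: "PX \<beta> \<in> strategies \<alpha>" using a b by (intro PX_strat) auto
  note p = strat_facts[OF P] and q = strat_facts[OF Q]
  interpret P: prob_space "PX \<beta>" by (rule p(2))
  interpret Q: prob_space Q by (rule q(2))
  have "(\<integral>x. 1 - x \<partial>PX \<beta>) = enn2real (\<integral>\<^sup>+x. ennreal (1 - x) \<partial>PX \<beta>)"
  proof (rule integral_eq_nn_integral)
    show "AE x in PX \<beta>. 0 \<le> 1 - x" using p(3) by eventually_elim (use a in auto)
  qed (simp add: meas_cong_borel[OF p(1)])
  also have "\<dots> = \<beta> - \<beta> * ln \<beta>"
  proof -
    have "ln \<beta> < 0" using a b by (intro ln_less_zero) auto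
    then have "\<beta> * ln \<beta> < 0" using a b by (intro mult_pos_neg) auto
    then have "0 \<le> \<beta> - \<beta> * ln \<beta>" using a b by linarith
    then show ?thesis using a b by (simp add: PX_mean)
  qed
  finally have m: "(\<integral>x. 1 - x \<partial>PX \<beta>) = \<beta> - \<beta> * ln \<beta>" .
  have "Tk (PX \<beta>) Q = (\<integral>\<^sup>+y. (\<integral>\<^sup>+x. kern x y \<partial>PX \<beta>) \<partial>Q)" by (rule Tk_swap[OF P Q])
  also have "\<dots> \<le> (\<integral>\<^sup>+y. ennreal \<beta> \<partial>Q)"
  proof (rule nn_integral_mono_AE)
    show "AE y in Q. (\<integral>\<^sup>+x. kern x y \<partial>PX \<beta>) \<le> ennreal \<beta>"
      using q(3) by eventually_elim (use a b in \<open>auto intro!: PX_y\<close>)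
  qed
  also have "\<dots> = ennreal \<beta>" by (simp add: Q.emeasure_space_1)
  finally have "enn2real (Tk (PX \<beta>) Q) \<le> \<beta>" using a b by (intro enn2real_leI) auto
  then show ?thesis using exp_payoff_formula[OF P Q a] m by simp
qed


definition QY :: "real \<Rightarrow> real \<Rightarrow> real \<Rightarrow> real measure" where
  "QY b c L = atom_plus_density b c (\<lambda>y. 1 / (1 - y)) L"

lemma QY_nn:
  assumes "0 \<le> b" "g \<in> borel_measurable borel"
  shows "(\<integral>\<^sup>+x. g x \<partial>QY b c L) = ennreal b * g c + (\<integral>\<^sup>+x. ennreal (1 / (1 - x)) * indicator {0..L} x * g x \<partial>lborel)"
  unfolding QY_def by (rule apd_nn_integral) (use assms in auto)

lemma QY_sets: "0 \<le> b \<Longrightarrow> sets (QY b c L) = sets borel"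
  unfolding QY_def by (rule apd_basic(1)) auto

lemma QY_emeasure:
  assumes b: "0 \<le> b" "0 \<le> L" "L < 1" "b - ln (1 - L) = 1"
    and A: "A \<in> sets borel" "c \<in> A" "{0..L} \<subseteq> A"
  shows "emeasure (QY b c L) A = 1"
proof -
  have "emeasure (QY b c L) A = (\<integral>\<^sup>+x. indicator A x \<partial>QY b c L)"
    using A QY_sets[of b c L] b by (simp add: nn_integral_indicator)
  also have "\<dots> = ennreal b + (\<integral>\<^sup>+x. ennreal (1 / (1 - x)) * indicator {0..L} x \<partial>lborel)"
    using A b
    by (subst QY_nn) (auto intro!: nn_integral_cong simp: indicator_def subset_iff)
  also have "\<dots> = ennreal b + ennreal (- 1 * ln (1 - L))"
    using b by (subst FTC2) auto
  also have "\<dots> = ennreal (b + - 1 * ln (1 - L))"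
    using b by (subst ennreal_plus) (auto simp: ln_le_zero_iff)
  also have "\<dots> = 1" using b by simp
  finally show ?thesis .
qed

lemma QY_strat:
  assumes "0 < \<alpha>" "0 \<le> b" "0 \<le> L" "L < 1" "L \<le> 1 - \<alpha>" "b - ln (1 - L) = 1" "0 \<le> c" "c \<le> 1 - \<alpha>"
  shows "QY b c L \<in> strategies \<alpha>"
proof -
  have s: "sets (QY b c L) = sets borel" using assms by (intro QY_sets) auto
  have sp: "space (QY b c L) = UNIV" using sets_eq_imp_space_eq[OF s] by simp
  have "prob_space (QY b c L)"
    by (rule prob_spaceI) (use assms sp in \<open>auto intro!: QY_emeasure\<close>)
  moreover have "emeasure (QY b c L) {0..1-\<alpha>} = 1"
    using assms by (intro QY_emeasure) auto
  ultimately show ?thesis using s by (simp add: strategies_def)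
qed

lemma QY_k:
  assumes b: "0 \<le> b" "c \<le> 1" "L < 1" and x: "0 \<le> x"
  shows "(\<integral>\<^sup>+y. kern x y \<partial>QY b c L) = ennreal (b * (if x \<le> c then 1 - c else 0) + max 0 (L - x))"
proof -
  have km: "(\<lambda>y. kern x y) \<in> borel_measurable borel" unfolding kern_def by measurable
  have "(\<integral>\<^sup>+y. kern x y \<partial>QY b c L) = ennreal b * kern x c + (\<integral>\<^sup>+y. ennreal (1 / (1 - y)) * indicator {0..L} y * kern x y \<partial>lborel)"
    using b km by (intro QY_nn) auto
  also have "(\<integral>\<^sup>+y. ennreal (1 / (1 - y)) * indicator {0..L} y * kern x y \<partial>lborel) = (\<integral>\<^sup>+y. indicator {x..L} y \<partial>lborel)"
  proof (intro nn_integral_cong)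
    fix y :: real
    show "ennreal (1 / (1 - y)) * indicator {0..L} y * kern x y = indicator {x..L} y"
    proof (cases "y \<in> {x..L}")
      case True
      then have "y < 1" "0 \<le> y" using b x by auto
      then have "ennreal (1 / (1 - y)) * ennreal (1 - y) = 1"
        by (simp add: ennreal_mult''[symmetric])
      then show ?thesis using True x by (simp add: kern_def)
    qed (auto simp: kern_def indicator_def)
  qed
  also have "\<dots> = ennreal (max 0 (L - x))"
    by (simp add: emeasure_lborel_Icc_eq max_def)
  also have "kern x c = ennreal (if x \<le> c then 1 - c else 0)" by (simp add: kern_def)
  finally show ?thesis using b
    by (simp add: ennreal_mult[symmetric] ennreal_plus[symmetric])
qed


lemma QY_opt:
  assumes a: "0 < \<alpha>" "\<alpha> < 1" and P: "P \<in> strategies \<alpha>" and Q: "QY b c L \<in> strategies \<alpha>"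
    and b: "0 \<le> b" "0 \<le> c" "c \<le> 1" "L < 1"
    and H: "\<And>x. x \<in> {0..1-\<alpha>} \<Longrightarrow> 1 - x - (b * (if x \<le> c then 1 - c else 0) + max 0 (L - x)) \<le> v"
  shows "exp_payoff P (QY b c L) \<le> v"
proof -
  define h where "h x = b * (if x \<le> c then 1 - c else 0) + max 0 (L - x)" for x
  note p = strat_facts[OF P]
  interpret P: prob_space P by (rule p(2))
  have hm: "h \<in> borel_measurable P" unfolding h_def by (rule meas_cong_borel[OF p(1)]) measurable
  have "Tk P (QY b c L) = (\<integral>\<^sup>+x. ennreal (h x) \<partial>P)"
    unfolding Tk_def
  proof (rule nn_integral_cong_AE)
    show "AE x in P. (\<integral>\<^sup>+y. kern x y \<partial>QY b c L) = ennreal (h x)"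
      using p(3) by eventually_elim (use b in \<open>auto simp: QY_k h_def\<close>)
  qed
  moreover have "(\<integral>x. h x \<partial>P) = enn2real (\<integral>\<^sup>+x. ennreal (h x) \<partial>P)"
  proof (rule integral_eq_nn_integral[OF hm])
    show "AE x in P. 0 \<le> h x" using b by (auto simp: h_def)
  qed
  ultimately have T: "enn2real (Tk P (QY b c L)) = (\<integral>x. h x \<partial>P)" by simp
  have bc: "b * (1 - c) \<le> b" using b by (intro mult_left_le) auto
  have ih: "integrable P h"
  proof (rule P.integrable_const_bound[where B="b + 1"])
    show "AE x in P. norm (h x) \<le> b + 1"
      using p(3) by eventually_elim (use b a bc in \<open>auto simp: h_def max_def\<close>)
  qed (rule hm)
  have "exp_payoff P (QY b c L) = (\<integral>x. 1 - x \<partial>P) - (\<integral>x. h x \<partial>P)"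
    using exp_payoff_formula[OF P Q a] T by simp
  also have "\<dots> = (\<integral>x. 1 - x - h x \<partial>P)"
    by (rule Bochner_Integration.integral_diff[symmetric, OF int_1mx(1)[OF P a] ih])
  also have "\<dots> \<le> v"
  proof (rule P.integral_le_const)
    show "integrable P (\<lambda>x. 1 - x - h x)" using int_1mx(1)[OF P a] ih by simp
    show "AE x in P. 1 - x - h x \<le> v" using p(3) by eventually_elim (use H in \<open>auto simp: h_def\<close>)
  qed
  finally show ?thesis .
qed


theorem lemma1:
  fixes \<alpha> :: real
  assumes "0 < \<alpha>" and "\<alpha> < 1"
  shows "(\<alpha> \<ge> 1 / exp 1 \<longrightarrow>
            is_value \<alpha> (- \<alpha> * ln \<alpha>)
          \<and> optimal_x \<alpha> (- \<alpha> * ln \<alpha>)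
              (atom_plus_density \<alpha> 0 (\<lambda>x. \<alpha> / (1 - x)\<^sup>2) (1 - \<alpha>))
          \<and> optimal_y \<alpha> (- \<alpha> * ln \<alpha>)
              (atom_plus_density (1 + ln \<alpha>) (1 - \<alpha>) (\<lambda>y. 1 / (1 - y)) (1 - \<alpha>)))
       \<and> (\<alpha> < 1 / exp 1 \<longrightarrow>
            is_value \<alpha> (1 / exp 1)
          \<and> optimal_x \<alpha> (1 / exp 1)
              (atom_plus_density (1 / exp 1) 0 (\<lambda>x. 1 / (exp 1 * (1 - x)\<^sup>2)) (1 - 1 / exp 1))
          \<and> optimal_y \<alpha> (1 / exp 1)
              (atom_plus_density 0 0 (\<lambda>y. 1 / (1 - y)) (1 - 1 / exp 1)))"
proof -
  note a = assms
  have bd: "\<And>P Q. P \<in> strategies \<alpha> \<Longrightarrow> Q \<in> strategies \<alpha> \<Longrightarrow> \<bar>exp_payoff P Q\<bar> \<le> 2"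
    using exp_payoff_bound a by blast
  have e1: "1 < exp (1::real)" by simp
  have ie: "0 < 1 / exp (1::real)" "1 / exp (1::real) < 1" using e1 by auto
  have lnie: "ln (1 / exp 1) = (-1::real)" by (simp add: ln_div)
  have case1: "is_value \<alpha> (- \<alpha> * ln \<alpha>)
          \<and> optimal_x \<alpha> (- \<alpha> * ln \<alpha>)
              (atom_plus_density \<alpha> 0 (\<lambda>x. \<alpha> / (1 - x)\<^sup>2) (1 - \<alpha>))
          \<and> optimal_y \<alpha> (- \<alpha> * ln \<alpha>)
              (atom_plus_density (1 + ln \<alpha>) (1 - \<alpha>) (\<lambda>y. 1 / (1 - y)) (1 - \<alpha>))"
    if ge: "\<alpha> \<ge> 1 / exp 1"
  proof -
    have lnge: "-1 \<le> ln \<alpha>"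
    proof -
      have "ln (1 / exp 1) \<le> ln \<alpha>" using ge ie a by (subst ln_le_cancel_iff) auto
      then show ?thesis using lnie by simp
    qed
    have ox: "optimal_x \<alpha> (- \<alpha> * ln \<alpha>) (PX \<alpha>)"
      unfolding optimal_x_def using a PX_strat[of \<alpha> \<alpha>] PX_opt[of \<alpha> \<alpha>] by auto
    have Qs: "QY (1 + ln \<alpha>) (1 - \<alpha>) (1 - \<alpha>) \<in> strategies \<alpha>"
      using a lnge by (intro QY_strat) auto
    have oy: "optimal_y \<alpha> (- \<alpha> * ln \<alpha>) (QY (1 + ln \<alpha>) (1 - \<alpha>) (1 - \<alpha>))"
      unfolding optimal_y_def
    proof (intro conjI ballI Qs)
      fix P assume P: "P \<in> strategies \<alpha>"
      show "exp_payoff P (QY (1 + ln \<alpha>) (1 - \<alpha>) (1 - \<alpha>)) \<le> - \<alpha> * ln \<alpha>"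
      proof (rule QY_opt[OF a P Qs])
        fix x :: real assume x: "x \<in> {0..1-\<alpha>}"
        show "1 - x - ((1 + ln \<alpha>) * (if x \<le> 1 - \<alpha> then 1 - (1 - \<alpha>) else 0) + max 0 (1 - \<alpha> - x)) \<le> - \<alpha> * ln \<alpha>"
          using x by (simp add: algebra_simps)
      qed (use a lnge in auto)
    qed
    show ?thesis
      using value_from_optimal[OF ox oy bd] ox oy unfolding PX_def QY_def by simp
  qed
  have case2: "is_value \<alpha> (1 / exp 1)
          \<and> optimal_x \<alpha> (1 / exp 1)
              (atom_plus_density (1 / exp 1) 0 (\<lambda>x. 1 / (exp 1 * (1 - x)\<^sup>2)) (1 - 1 / exp 1))
          \<and> optimal_y \<alpha> (1 / exp 1)
              (atom_plus_density 0 0 (\<lambda>y. 1 / (1 - y)) (1 - 1 / exp 1))"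
    if lt: "\<alpha> < 1 / exp 1"
  proof -
    have feq: "(\<lambda>x. 1 / (exp 1 * (1 - x)\<^sup>2)) = (\<lambda>x::real. (1 / exp 1) / (1 - x)\<^sup>2)"
      by auto
    have vx: "- (1 / exp 1) * ln (1 / exp 1) = (1 / exp 1 :: real)" using lnie by simp
    have ox: "optimal_x \<alpha> (1 / exp 1) (PX (1 / exp 1))"
      unfolding optimal_x_def using a lt ie PX_strat[of \<alpha> "1 / exp 1"] PX_opt[of \<alpha> "1 / exp 1"] vx
      by auto
    have Qs: "QY 0 0 (1 - 1 / exp 1) \<in> strategies \<alpha>"
    proof (rule QY_strat)
      show "1 - 1 / exp 1 \<le> 1 - \<alpha>" using lt by linarith
      show "0 - ln (1 - (1 - 1 / exp 1)) = (1::real)" using lnie by simp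
    qed (use a ie in auto)
    have oy: "optimal_y \<alpha> (1 / exp 1) (QY 0 0 (1 - 1 / exp 1))"
      unfolding optimal_y_def
    proof (intro conjI ballI Qs)
      fix P assume P: "P \<in> strategies \<alpha>"
      show "exp_payoff P (QY 0 0 (1 - 1 / exp 1)) \<le> 1 / exp 1"
      proof (rule QY_opt[OF a P Qs])
        fix x :: real assume x: "x \<in> {0..1-\<alpha>}"
        show "1 - x - (0 * (if x \<le> 0 then 1 - 0 else 0) + max 0 (1 - 1 / exp 1 - x)) \<le> 1 / exp 1"
          using x by (auto simp: max_def)
      qed (use ie in auto)
    qed
    show ?thesis
      using value_from_optimal[OF ox oy bd] ox oy unfolding PX_def QY_def feq by simp
  qed
  show ?thesis using case1 case2 by blast
qed


end
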